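(* Assume $F(x,v,u)=F_0(x,v)+F_1(x,v)u$ with $F_0:\mathbb{R}^n\times\mathbb{R}^n\to\mathbb{R}^n$ and $F_1:\mathbb{R}^n\times\mathbb{R}^n\to\mathbb{R}^{n\times m}$ globally Lipschitz continuous and continuously differentiable, and $\phi\in C([-\tau,0];\mathbb{R}^n)$. Let $u\in L^\infty(I;\mathbb{R}^m)$. Then there exists a unique solution $x\in C(I_\tau;\mathbb{R}^n)\cap W^{1,\infty}(I;\mathbb{R}^n)$ of \[ x'(t)=F\Big(x(t),\max_{s\in[t-\tau,t]}x(s),u(t)\Big)\ \text{ for a.e. } t\in(0,T),\qquad x(t)=\phi(t)\ \text{ for } t\in[-\tau,0]. \] Moreover, the mapping $u\mapsto x$ maps bounded sets in $L^\infty(I;\mathbb{R}^m)$ to bounded sets in $W^{1,\infty}(I;\mathbb{R}^n)$.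
   Context: $n,m\ge1$, $T>0$, $\tau>0$, $I=[0,T]$, $I_\tau=[-\tau,T]$; the maximum over $s$ is taken componentwise. *)

theory Defs
  imports "HOL-Analysis.Analysis"
begin

definition C1_map :: "('a::real_normed_vector \<Rightarrow> 'b::real_normed_vector) \<Rightarrow> bool" where
  "C1_map f \<longleftrightarrow> (\<exists>D. (\<forall>z. (f has_derivative blinfun_apply (D z)) (at z)) \<and> continuous_on UNIV D)"

definition Linf :: "real \<Rightarrow> (real \<Rightarrow> 'a::euclidean_space) \<Rightarrow> bool" where
  "Linf T u \<longleftrightarrow> u \<in> borel_measurable (lebesgue_on {0..T}) \<and>
     (\<exists>B. AE t in lebesgue_on {0..T}. norm (u t) \<le> B)"

text \<open>x in W^{1,infinity}(0,T;R^n): x(t) = x(0) + int_0^t g with g in L-infinity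
  (the weak derivative).\<close>
definition W1inf :: "real \<Rightarrow> (real \<Rightarrow> 'a::euclidean_space) \<Rightarrow> bool" where
  "W1inf T x \<longleftrightarrow> Linf T x \<and>
     (\<exists>g. Linf T g \<and> (\<forall>t\<in>{0..T}. x t = x 0 + integral {0..t} g))"

definition W1inf_bounded_by :: "real \<Rightarrow> (real \<Rightarrow> 'a::euclidean_space) \<Rightarrow> real \<Rightarrow> bool" where
  "W1inf_bounded_by T x C \<longleftrightarrow>
     (AE t in lebesgue_on {0..T}. norm (x t) \<le> C) \<and>
     (\<exists>g. g \<in> borel_measurable (lebesgue_on {0..T}) \<and>
          (\<forall>t\<in>{0..T}. x t = x 0 + integral {0..t} g) \<and>
          (AE t in lebesgue_on {0..T}. norm (g t) \<le> C))"

text \<open>Componentwise maximum of x over [t - tau, t] (a maximum for continuous x).\<close>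
definition delay_max :: "real \<Rightarrow> (real \<Rightarrow> real^'n) \<Rightarrow> real \<Rightarrow> real^'n" where
  "delay_max \<tau> x t = (\<chi> i. SUP s\<in>{t-\<tau>..t}. x s $ i)"

definition is_solution ::
  "real \<Rightarrow> real \<Rightarrow> (real^'n \<Rightarrow> real^'n \<Rightarrow> real^'n) \<Rightarrow> (real^'n \<Rightarrow> real^'n \<Rightarrow> real^'m^'n)
   \<Rightarrow> (real \<Rightarrow> real^'n) \<Rightarrow> (real \<Rightarrow> real^'m) \<Rightarrow> (real \<Rightarrow> real^'n) \<Rightarrow> bool" where
  "is_solution T \<tau> F0 F1 \<phi> u x \<longleftrightarrow>
     continuous_on {-\<tau>..T} x \<and> W1inf T x \<and>
     (AE t in lebesgue_on {0<..<T}.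
        (x has_vector_derivative
           (F0 (x t) (delay_max \<tau> x t) + F1 (x t) (delay_max \<tau> x t) *v u t)) (at t)) \<and>
     (\<forall>t\<in>{-\<tau>..0}. x t = \<phi> t)"

end

theory Submission
  imports Defs
begin

lemma mv_norm:
  fixes A :: "real^'m^'n"
  shows "norm (A *v x) \<le> real CARD('n) * real CARD('m) * norm A * norm x"
proof -
  have "\<bar>A$i$j\<bar> \<le> norm A" for i j
    by (meson component_le_norm_cart Finite_Cartesian_Product.norm_nth_le order_trans)
  then have "onorm ((*v) A) \<le> real CARD('n) * real CARD('m) * norm A"
    by (rule onorm_le_matrix_component)
  moreover have "norm (A *v x) \<le> onorm ((*v) A) * norm x"
    by (rule onorm) (simp add: matrix_vector_mul_bounded_linear)
  ultimately show ?thesis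
    by (meson mult_right_mono norm_ge_zero order_trans)
qed

lemma dm_bdd:
  fixes X :: "real \<Rightarrow> real^'n"
  assumes "continuous_on {a..b} X"
  shows "bdd_above ((\<lambda>s. X s $ i) ` {a..b})"
proof -
  have "continuous_on {a..b} (\<lambda>s. X s $ i)"
    using assms by (intro continuous_intros)
  then have "compact ((\<lambda>s. X s $ i) ` {a..b})"
    by (intro compact_continuous_image) auto
  then show ?thesis by (intro bounded_imp_bdd_above compact_imp_bounded)
qed

lemma dm_diff:
  fixes X Y :: "real \<Rightarrow> real^'n"
  assumes "0 \<le> \<tau>" "continuous_on {r-\<tau>..r} X" "continuous_on {r-\<tau>..r} Y"
    "\<forall>s\<in>{r-\<tau>..r}. norm (X s - Y s) \<le> d"
  shows "norm (delay_max \<tau> X r - delay_max \<tau> Y r) \<le> real CARD('n) * d"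
proof -
  have ne: "{r-\<tau>..r} \<noteq> {}" using assms(1) by auto
  have one: "(SUP s\<in>{r-\<tau>..r}. X s $ i) \<le> (SUP s\<in>{r-\<tau>..r}. Y s $ i) + d"
    if "continuous_on {r-\<tau>..r} X" "continuous_on {r-\<tau>..r} Y"
      "\<forall>s\<in>{r-\<tau>..r}. norm (X s - Y s) \<le> d" for X Y :: "real \<Rightarrow> real^'n" and i
  proof (rule cSUP_least[OF ne])
    fix s assume s: "s \<in> {r-\<tau>..r}"
    have "X s $ i - Y s $ i \<le> norm (X s - Y s)"
      by (metis abs_le_D1 component_le_norm_cart vector_minus_component)
    also have "\<dots> \<le> d" using that(3) s by auto
    finally have "X s $ i \<le> Y s $ i + d" by simp
    also have "Y s $ i \<le> (SUP s\<in>{r-\<tau>..r}. Y s $ i)"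
      by (rule cSUP_upper[OF s dm_bdd[OF that(2)]])
    finally show "X s $ i \<le> (SUP s\<in>{r-\<tau>..r}. Y s $ i) + d" by simp
  qed
  have "\<bar>(delay_max \<tau> X r - delay_max \<tau> Y r) $ i\<bar> \<le> d" for i
  proof -
    have a: "(SUP s\<in>{r-\<tau>..r}. X s $ i) \<le> (SUP s\<in>{r-\<tau>..r}. Y s $ i) + d"
      by (rule one[OF assms(2,3,4)])
    have b: "(SUP s\<in>{r-\<tau>..r}. Y s $ i) \<le> (SUP s\<in>{r-\<tau>..r}. X s $ i) + d"
      by (rule one[OF assms(3,2)]) (use assms(4) in \<open>auto simp: norm_minus_commute\<close>)
    show ?thesis using a b by (simp add: delay_max_def)
  qed
  then have "norm (delay_max \<tau> X r - delay_max \<tau> Y r) \<le> (\<Sum>i\<in>(UNIV::'n set). d)"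
    using norm_le_l1_cart[of "delay_max \<tau> X r - delay_max \<tau> Y r"] sum_mono[of UNIV
      "\<lambda>i. \<bar>(delay_max \<tau> X r - delay_max \<tau> Y r) $ i\<bar>" "\<lambda>_. d"] by auto
  then show ?thesis by simp
qed

lemma dm_zero: "0 \<le> \<tau> \<Longrightarrow> delay_max \<tau> (\<lambda>_. 0) r = (0::real^'n)"
  by (simp add: delay_max_def vec_eq_iff cSUP_const)

lemma dm_shift:
  "delay_max \<tau> (\<lambda>s. X (s + h)) t = delay_max \<tau> X (t + h)"
proof -
  have im: "(\<lambda>s. s + h) ` {t-\<tau>..t} = {t+h-\<tau>..t+h}"
    by simp
  have "(SUP s\<in>{t-\<tau>..t}. X (s + h) $ i) = (SUP s\<in>(\<lambda>s. s + h) ` {t-\<tau>..t}. X s $ i)" for i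
    by (simp only: image_image)
  then show ?thesis unfolding delay_max_def im by simp
qed

lemma dm_cont:
  fixes X :: "real \<Rightarrow> real^'n"
  assumes tau: "0 \<le> \<tau>" and X: "continuous_on {-\<tau>..T} X"
  shows "continuous_on {0..T} (delay_max \<tau> X)"
  unfolding continuous_on_iff
proof (intro ballI allI impI)
  fix t e :: real assume t: "t \<in> {0..T}" and e: "0 < e"
  have uc: "uniformly_continuous_on {-\<tau>..T} X"
    using X by (intro compact_uniformly_continuous) auto
  define e' where "e' = e / (2 * real CARD('n))"
  have e': "0 < e'" using e by (simp add: e'_def)
  obtain d where d: "0 < d" and dd: "\<And>x x'. x \<in> {-\<tau>..T} \<Longrightarrow> x' \<in> {-\<tau>..T} \<Longrightarrow> dist x' x < d \<Longrightarrow> dist (X x') (X x) < e'"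
    using uc e' unfolding uniformly_continuous_on_def by metis
  show "\<exists>d>0. \<forall>t'\<in>{0..T}. dist t' t < d \<longrightarrow> dist (delay_max \<tau> X t') (delay_max \<tau> X t) < e"
  proof (intro exI conjI ballI impI)
    fix t' assume t': "t' \<in> {0..T}" and dt: "dist t' t < d"
    define h where "h = t' - t"
    have "norm (delay_max \<tau> X t - delay_max \<tau> (\<lambda>s. X (s + h)) t) \<le> real CARD('n) * e'"
    proof (rule dm_diff[OF tau])
      show "continuous_on {t - \<tau>..t} X" by (rule continuous_on_subset[OF X]) (use t in auto)
      show "continuous_on {t - \<tau>..t} (\<lambda>s. X (s + h))"
      proof (rule continuous_on_compose2[OF X])
        show "continuous_on {t - \<tau>..t} (\<lambda>s. s + h)" by (intro continuous_intros)
        show "(\<lambda>s. s + h) ` {t - \<tau>..t} \<subseteq> {- \<tau>..T}" using t t' by (simp add: h_def)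
      qed
      show "\<forall>s\<in>{t - \<tau>..t}. norm (X s - X (s + h)) \<le> e'"
      proof
        fix s assume s: "s \<in> {t - \<tau>..t}"
        have "s \<in> {-\<tau>..T}" "s + h \<in> {-\<tau>..T}" "dist (s+h) s < d"
          using s t t' dt by (auto simp: h_def dist_real_def)
        then have "dist (X (s+h)) (X s) < e'"
          by (rule dd)
        then show "norm (X s - X (s + h)) \<le> e'" by (simp add: dist_norm norm_minus_commute)
      qed
    qed
    also have "\<dots> < e" using e by (simp add: e'_def)
    finally show "dist (delay_max \<tau> X t') (delay_max \<tau> X t) < e"
      by (simp add: dm_shift h_def dist_norm norm_minus_commute)
  qed (rule d)
qed

lemma AE_on_negligible:
  assumes "AE x in lebesgue_on S. P x" "S \<in> sets lebesgue"
  obtains N where "negligible N" "\<And>x. x \<in> S \<Longrightarrow> x \<notin> N \<Longrightarrow> P x"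
proof -
  obtain N where N: "{x\<in>space (lebesgue_on S). \<not> P x} \<subseteq> N" "N \<in> null_sets (lebesgue_on S)"
    using assms(1) unfolding eventually_ae_filter by blast
  have N': "N \<in> null_sets lebesgue" using N(2) null_sets_restrict_space[OF assms(2)] by simp
  have sp: "space (lebesgue_on S) = S" by (simp add: space_restrict_space)
  show ?thesis
  proof (rule that)
    show "negligible N" using N' by (simp add: negligible_iff_null_sets)
    fix x assume "x \<in> S" "x \<notin> N" then show "P x" using N(1) unfolding sp by blast
  qed
qed

lemma negligible_AE_on:
  assumes "negligible N" "S \<in> sets lebesgue" "\<And>x. x \<in> S \<Longrightarrow> x \<notin> N \<Longrightarrow> P x"
  shows "AE x in lebesgue_on S. P x"
proof (rule AE_I')
  have "N \<inter> S \<in> null_sets lebesgue"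
    using assms(1,2) by (intro null_set_Int2) (simp_all add: negligible_iff_null_sets)
  then show "N \<inter> S \<in> null_sets (lebesgue_on S)"
    using null_sets_restrict_space[OF assms(2)] by blast
  show "{x \<in> space (lebesgue_on S). \<not> P x} \<subseteq> N \<inter> S"
    using assms(3) by auto
qed

lemma lip_pair:
  assumes "L-lipschitz_on UNIV (\<lambda>(x, v). F x v)"
  shows "dist (F x v) (F x' v') \<le> L * (dist x x' + dist v v')"
proof -
  have L: "0 \<le> L" using assms by (simp add: lipschitz_on_def)
  have A: "\<forall>p\<in>UNIV. \<forall>q\<in>UNIV. dist ((\<lambda>(x, v). F x v) p) ((\<lambda>(x, v). F x v) q) \<le> L * dist p q"
    using assms unfolding lipschitz_on_def by blast
  have "dist (F x v) (F x' v') \<le> L * dist (x, v) (x', v')"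
    using A[rule_format, of "(x,v)" "(x',v')"] by simp
  also have "\<dots> \<le> L * (dist x x' + dist v v')"
    by (rule mult_left_mono[OF _ L]) (simp add: dist_Pair_Pair sqrt_sum_squares_le_sum)
  finally show ?thesis .
qed

lemma lip_pair_cont:
  assumes "L-lipschitz_on UNIV (\<lambda>(x, v). F x v)"
  shows "continuous_on UNIV (\<lambda>p. F (fst p) (snd p))"
proof -
  have "continuous_on UNIV (\<lambda>(x, v). F x v)"
    using assms by (rule lipschitz_on_continuous_on)
  then show ?thesis by (simp add: case_prod_beta')
qed

lemma mv_cont: "continuous_on UNIV (\<lambda>p. fst p *v (snd p :: real^'m) :: real^'n)"
  unfolding matrix_vector_mult_def
  by (intro continuous_intros continuous_on_vec_lambda)

locale dde =
  fixes T \<tau> :: real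
    and F0 :: "real^'n \<Rightarrow> real^'n \<Rightarrow> real^'n"
    and F1 :: "real^'n \<Rightarrow> real^'n \<Rightarrow> real^'m^'n"
    and \<phi> :: "real \<Rightarrow> real^'n"
    and L0 L1 :: real
  assumes T: "0 < T" and tau: "0 < \<tau>"
    and L0: "L0-lipschitz_on UNIV (\<lambda>(x, v). F0 x v)"
    and L1: "L1-lipschitz_on UNIV (\<lambda>(x, v). F1 x v)"
    and phi: "continuous_on {-\<tau>..0} \<phi>"
begin

lemma L0_nonneg: "0 \<le> L0" using L0 by (simp add: lipschitz_on_def)
lemma L1_nonneg: "0 \<le> L1" using L1 by (simp add: lipschitz_on_def)

lemma F0_lip: "norm (F0 x v - F0 x' v') \<le> L0 * (norm (x - x') + norm (v - v'))"
  using lip_pair[OF L0] by (simp add: dist_norm)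
lemma F1_lip: "norm (F1 x v - F1 x' v') \<le> L1 * (norm (x - x') + norm (v - v'))"
  using lip_pair[OF L1] by (simp add: dist_norm)
lemma F0_cont: "continuous_on UNIV (\<lambda>p. F0 (fst p) (snd p))"
  by (rule lip_pair_cont[OF L0])
lemma F1_cont: "continuous_on UNIV (\<lambda>p. F1 (fst p) (snd p))"
  by (rule lip_pair_cont[OF L1])

end

locale dde_u = dde T \<tau> F0 F1 \<phi> L0 L1
  for T \<tau> :: real
    and F0 :: "real^'n \<Rightarrow> real^'n \<Rightarrow> real^'n"
    and F1 :: "real^'n \<Rightarrow> real^'n \<Rightarrow> real^'m^'n"
    and \<phi> :: "real \<Rightarrow> real^'n"
    and L0 L1 :: real +
  fixes u :: "real \<Rightarrow> real^'m" and B :: real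
  assumes B: "0 \<le> B"
    and umeas: "u \<in> borel_measurable (lebesgue_on {0..T})"
    and uB: "AE t in lebesgue_on {0..T}. norm (u t) \<le> B"
begin

definition ut where "ut r = (if norm (u r) \<le> B then u r else 0)"

lemma ut_bound: "norm (ut r) \<le> B"
  using B by (simp add: ut_def)

lemma ut_meas: "ut \<in> borel_measurable (lebesgue_on {0..T})"
  unfolding ut_def using umeas by measurable

lemma ut_ae: "AE r in lebesgue_on {0..T}. ut r = u r"
  using uB by eventually_elim (simp add: ut_def)

definition "Lc = (L0 + real CARD('n) * real CARD('m) * L1 * B) * (1 + real CARD('n))"
definition "A0 = norm (F0 0 0) + real CARD('n) * real CARD('m) * norm (F1 0 0) * B"
definition "fx X r = F0 (X r) (delay_max \<tau> X r) + F1 (X r) (delay_max \<tau> X r) *v ut r"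
definition "fh X r = (if r \<in> {0..T} then fx X r else 0)"
definition "PG X s = (if s \<le> 0 then \<phi> s else \<phi> 0 + integral {0..s} (fh X))"

lemma Lc_nonneg: "0 \<le> Lc"
  unfolding Lc_def using L0_nonneg L1_nonneg B by simp

lemma fx_diff:
  fixes X Y :: "real \<Rightarrow> real^'n"
  assumes X: "continuous_on {r-\<tau>..r} X" and Y: "continuous_on {r-\<tau>..r} Y"
    and d: "\<forall>s\<in>{r-\<tau>..r}. norm (X s - Y s) \<le> d"
  shows "norm (fx X r - fx Y r) \<le> Lc * d"
proof -
  define NN where "NN = real CARD('n)"
  define MM where "MM = real CARD('m)"
  have r: "r \<in> {r-\<tau>..r}" using tau by auto
  have d1: "norm (X r - Y r) \<le> d" using d r by blast
  have d0: "0 \<le> d" using d1 norm_ge_zero order_trans by blast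
  have d2: "norm (delay_max \<tau> X r - delay_max \<tau> Y r) \<le> NN * d"
    unfolding NN_def using tau by (intro dm_diff X Y d) simp
  have e0: "norm (F0 (X r) (delay_max \<tau> X r) - F0 (Y r) (delay_max \<tau> Y r)) \<le> L0 * (d + NN * d)"
    using F0_lip[of "X r" "delay_max \<tau> X r" "Y r" "delay_max \<tau> Y r"] d1 d2 L0_nonneg
    by (smt (verit, ccfv_SIG) mult_left_mono)
  have e1: "norm (F1 (X r) (delay_max \<tau> X r) - F1 (Y r) (delay_max \<tau> Y r)) \<le> L1 * (d + NN * d)"
    using F1_lip[of "X r" "delay_max \<tau> X r" "Y r" "delay_max \<tau> Y r"] d1 d2 L1_nonneg
    by (smt (verit, ccfv_SIG) mult_left_mono)
  have e2: "norm ((F1 (X r) (delay_max \<tau> X r) - F1 (Y r) (delay_max \<tau> Y r)) *v ut r)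
      \<le> NN * MM * (L1 * (d + NN * d)) * B"
  proof -
    have "norm ((F1 (X r) (delay_max \<tau> X r) - F1 (Y r) (delay_max \<tau> Y r)) *v ut r)
      \<le> NN * MM * norm (F1 (X r) (delay_max \<tau> X r) - F1 (Y r) (delay_max \<tau> Y r)) * norm (ut r)"
      unfolding NN_def MM_def by (rule mv_norm)
    also have "\<dots> \<le> NN * MM * (L1 * (d + NN * d)) * B"
      using e1 ut_bound[of r] B d0 L1_nonneg by (intro mult_mono mult_left_mono) (auto simp: NN_def MM_def)
    finally show ?thesis .
  qed
  have "fx X r - fx Y r = (F0 (X r) (delay_max \<tau> X r) - F0 (Y r) (delay_max \<tau> Y r))
     + (F1 (X r) (delay_max \<tau> X r) - F1 (Y r) (delay_max \<tau> Y r)) *v ut r"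
    by (simp add: fx_def matrix_vector_mult_diff_rdistrib)
  then have "norm (fx X r - fx Y r) \<le> L0 * (d + NN * d) + NN * MM * (L1 * (d + NN * d)) * B"
    using e0 e2 norm_triangle_ineq by (smt (verit))
  also have "\<dots> = Lc * d" by (simp add: Lc_def NN_def MM_def algebra_simps)
  finally show ?thesis .
qed

lemma fx_zero: "norm (fx (\<lambda>_. 0) r) \<le> A0"
proof -
  have "fx (\<lambda>_. 0) r = F0 0 0 + F1 0 0 *v ut r"
    using tau by (simp add: fx_def dm_zero)
  also have "norm \<dots> \<le> norm (F0 0 0) + norm (F1 0 0 *v ut r)" by (rule norm_triangle_ineq)
  also have "norm (F1 0 0 *v ut r) \<le> real CARD('n) * real CARD('m) * norm (F1 0 0) * norm (ut r)"
    by (rule mv_norm)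
  also have "\<dots> \<le> real CARD('n) * real CARD('m) * norm (F1 0 0) * B"
    using ut_bound[of r] by (intro mult_left_mono) auto
  finally show ?thesis by (simp add: A0_def)
qed

lemma fx_bound:
  fixes X :: "real \<Rightarrow> real^'n"
  assumes X: "continuous_on {r-\<tau>..r} X" and d: "\<forall>s\<in>{r-\<tau>..r}. norm (X s) \<le> d"
  shows "norm (fx X r) \<le> A0 + Lc * d"
proof -
  have "norm (fx X r - fx (\<lambda>_. 0) r) \<le> Lc * d"
    by (rule fx_diff) (use X d in auto)
  then show ?thesis using fx_zero[of r] norm_triangle_ineq2[of "fx X r" "fx (\<lambda>_. 0) r"] by linarith
qed

end

lemma exp_int:
  fixes K c t :: real
  assumes K: "0 < K" and t: "0 \<le> t"
  shows "((\<lambda>r. c * exp (K * r)) has_integral (c * (exp (K * t) - 1) / K)) {0..t}"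
proof -
  have "((\<lambda>r. c * exp (K * r)) has_integral ((\<lambda>r. c * exp (K * r) / K) t - (\<lambda>r. c * exp (K * r) / K) 0)) {0..t}"
  proof (rule fundamental_theorem_of_calculus[OF t])
    fix x assume "x \<in> {0..t}"
    have "((\<lambda>r. c * exp (K * r) / K) has_real_derivative c * exp (K * x)) (at x within {0..t})"
      using K by (auto intro!: derivative_eq_intros)
    then show "((\<lambda>r. c * exp (K * r) / K) has_vector_derivative c * exp (K * x)) (at x within {0..t})"
      by (simp add: has_real_derivative_iff_has_vector_derivative)
  qed
  then show ?thesis by (simp add: diff_divide_distrib right_diff_distrib)
qed

lemma cont_bounded:
  fixes X :: "real \<Rightarrow> 'a::real_normed_vector"
  assumes "continuous_on {a..b} X"
  obtains d where "0 \<le> d" "\<And>s. s \<in> {a..b} \<Longrightarrow> norm (X s) \<le> d"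
proof -
  have "compact (X ` {a..b})" using assms by (intro compact_continuous_image) auto
  then obtain d where "0 < d" "\<forall>y\<in>X ` {a..b}. norm y \<le> d"
    using compact_imp_bounded bounded_pos by metis
  then show ?thesis using that[of d] by auto
qed

context dde_u begin

lemma fx_meas:
  assumes X: "continuous_on {-\<tau>..T} X"
  shows "fx X \<in> borel_measurable (lebesgue_on {0..T})"
proof -
  have c1: "continuous_on {0..T} X" by (rule continuous_on_subset[OF X]) (use tau in auto)
  have c2: "continuous_on {0..T} (delay_max \<tau> X)" using dm_cont[of \<tau> T X] tau X by simp
  have m1: "X \<in> borel_measurable (lebesgue_on {0..T})"
    by (rule continuous_imp_measurable_on_sets_lebesgue[OF c1]) simp
  have m2: "delay_max \<tau> X \<in> borel_measurable (lebesgue_on {0..T})"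
    by (rule continuous_imp_measurable_on_sets_lebesgue[OF c2]) simp
  have m3: "(\<lambda>r. F0 (X r) (delay_max \<tau> X r)) \<in> borel_measurable (lebesgue_on {0..T})"
    by (rule borel_measurable_continuous_Pair[OF m1 m2 F0_cont])
  have m4: "(\<lambda>r. F1 (X r) (delay_max \<tau> X r)) \<in> borel_measurable (lebesgue_on {0..T})"
    by (rule borel_measurable_continuous_Pair[OF m1 m2 F1_cont])
  have m5: "(\<lambda>r. F1 (X r) (delay_max \<tau> X r) *v ut r) \<in> borel_measurable (lebesgue_on {0..T})"
    by (rule borel_measurable_continuous_Pair[OF m4 ut_meas mv_cont])
  show ?thesis unfolding fx_def[abs_def] using m3 m5 by (rule borel_measurable_add)
qed

lemma fh_meas:
  assumes X: "continuous_on {-\<tau>..T} X"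
  shows "fh X \<in> borel_measurable lebesgue"
  unfolding fh_def[abs_def] by (rule borel_measurable_if_I[OF fx_meas[OF X]]) simp

lemma fh_bounded:
  assumes X: "continuous_on {-\<tau>..T} X"
  obtains C where "0 \<le> C" "\<And>r. norm (fh X r) \<le> C"
proof -
  obtain d where d: "0 \<le> d" "\<And>s. s \<in> {-\<tau>..T} \<Longrightarrow> norm (X s) \<le> d"
    using cont_bounded[OF X] by blast
  have A0: "0 \<le> A0" unfolding A0_def using B by simp
  have "norm (fh X r) \<le> A0 + Lc * d" for r
  proof (cases "r \<in> {0..T}")
    case True
    then have "norm (fx X r) \<le> A0 + Lc * d"
      by (intro fx_bound continuous_on_subset[OF X]) (use d in auto)
    then show ?thesis using True by (simp add: fh_def)
  next
    case False
    then have "norm (fh X r) = 0" unfolding fh_def by auto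
    then show ?thesis using A0 Lc_nonneg d by simp
  qed
  then show ?thesis using that[of "A0 + Lc * d"] A0 Lc_nonneg d by simp
qed

lemma fh_int:
  assumes X: "continuous_on {-\<tau>..T} X"
  shows "fh X integrable_on cbox a b"
proof -
  obtain C where C: "0 \<le> C" "\<And>r. norm (fh X r) \<le> C" using fh_bounded[OF X] by blast
  show ?thesis
  proof (rule measurable_bounded_by_integrable_imp_integrable)
    show "fh X \<in> borel_measurable (lebesgue_on (cbox a b))"
      using fh_meas[OF X] by (rule measurable_restrict_space1)
    show "(\<lambda>_. C) integrable_on cbox a b" by (rule integrable_const)
  qed (use C in auto)
qed

lemma fh_int': "continuous_on {-\<tau>..T} X \<Longrightarrow> fh X integrable_on {a..b}"
  using fh_int[of X a b] by simp

lemma PG_cont: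
  assumes X: "continuous_on {-\<tau>..T} X"
  shows "continuous_on {-\<tau>..T} (PG X)"
proof -
  have "continuous_on ({-\<tau>..0} \<union> {0..T}) (\<lambda>s. if s \<le> 0 then \<phi> s else \<phi> 0 + integral {0..s} (fh X))"
  proof (rule continuous_on_cases)
    show "continuous_on {0..T} (\<lambda>s. \<phi> 0 + integral {0..s} (fh X))"
      by (intro continuous_intros indefinite_integral_continuous_1 fh_int' X)
  qed (use phi in auto)
  moreover have "{-\<tau>..0} \<union> {0..T} = {-\<tau>..T}" using tau T by auto
  ultimately show ?thesis by (simp add: PG_def[abs_def])
qed

end

context dde begin
definition "Pphi = (SUP s\<in>{-\<tau>..0}. norm (\<phi> s))"

lemma Pphi: "s \<in> {-\<tau>..0} \<Longrightarrow> norm (\<phi> s) \<le> Pphi"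
  unfolding Pphi_def
proof (rule cSUP_upper)
  have "compact ((\<lambda>s. norm (\<phi> s)) ` {-\<tau>..0})"
    by (intro compact_continuous_image continuous_intros phi) auto
  then show "bdd_above ((\<lambda>s. norm (\<phi> s)) ` {-\<tau>..0})"
    by (intro bounded_imp_bdd_above compact_imp_bounded)
qed

lemma Pphi_nonneg: "0 \<le> Pphi"
  using order_trans[OF norm_ge_zero Pphi[of 0]] tau by auto
end

context dde_u begin

definition "Kc = 2 * Lc + 1"
definition "Cx = 2 * (norm (\<phi> 0) + A0 * T + Pphi) * exp (Kc * T)"

lemma Kc_pos: "0 < Kc" using Lc_nonneg by (simp add: Kc_def)
lemma A0_nonneg: "0 \<le> A0" unfolding A0_def using B by simp

lemma Lc_Kc: "0 \<le> D \<Longrightarrow> Lc * D / Kc \<le> D / 2"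
  using Lc_nonneg by (simp add: Kc_def field_simps)

lemma PG_diff:
  assumes X: "continuous_on {-\<tau>..T} X" and Y: "continuous_on {-\<tau>..T} Y"
    and K: "0 < K" and D: "0 \<le> D"
    and XY: "\<forall>s\<in>{-\<tau>..T}. norm (X s - Y s) \<le> D * exp (K * max 0 s)"
    and t: "t \<in> {0..T}"
  shows "norm (PG X t - PG Y t) \<le> Lc * D / K * exp (K * t)"
proof (cases "t \<le> 0")
  case True
  have "0 \<le> Lc * D / K * exp (K * t)"
    using Lc_nonneg D K by (intro mult_nonneg_nonneg divide_nonneg_pos) auto
  then show ?thesis using True by (simp add: PG_def)
next
  case False
  have iX: "fh X integrable_on {0..t}" by (rule fh_int'[OF X])
  have iY: "fh Y integrable_on {0..t}" by (rule fh_int'[OF Y])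
  have ie: "((\<lambda>r. Lc * D * exp (K * r)) has_integral (Lc * D * (exp (K * t) - 1) / K)) {0..t}"
    using exp_int[OF K, of t "Lc * D"] False by simp
  have "PG X t - PG Y t = integral {0..t} (\<lambda>r. fh X r - fh Y r)"
    using False by (simp add: PG_def integral_diff[OF iX iY])
  also have "norm \<dots> \<le> integral {0..t} (\<lambda>r. Lc * D * exp (K * r))"
  proof (rule integral_norm_bound_integral)
    show "(\<lambda>r. fh X r - fh Y r) integrable_on {0..t}" using iX iY by (rule integrable_diff)
    show "(\<lambda>r. Lc * D * exp (K * r)) integrable_on {0..t}" using ie by blast
    fix r assume r: "r \<in> {0..t}"
    have "norm (fx X r - fx Y r) \<le> Lc * (D * exp (K * r))"
    proof (rule fx_diff)
      show "continuous_on {r - \<tau>..r} X" by (rule continuous_on_subset[OF X]) (use r t in auto)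
      show "continuous_on {r - \<tau>..r} Y" by (rule continuous_on_subset[OF Y]) (use r t in auto)
      show "\<forall>s\<in>{r - \<tau>..r}. norm (X s - Y s) \<le> D * exp (K * r)"
      proof
        fix s assume s: "s \<in> {r - \<tau>..r}"
        then have "s \<in> {-\<tau>..T}" using r t by auto
        then have "norm (X s - Y s) \<le> D * exp (K * max 0 s)" using XY by blast
        also have "\<dots> \<le> D * exp (K * r)"
          using s r K D by (intro mult_left_mono) auto
        finally show "norm (X s - Y s) \<le> D * exp (K * r)" .
      qed
    qed
    then show "norm (fh X r - fh Y r) \<le> Lc * D * exp (K * r)"
      using r t by (simp add: fh_def mult.assoc)
  qed
  also have "\<dots> = Lc * D * (exp (K * t) - 1) / K" using ie by (rule integral_unique)
  also have "\<dots> \<le> Lc * D / K * exp (K * t)"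
  proof -
    have "Lc * D * (exp (K * t) - 1) \<le> Lc * D * exp (K * t)"
      using Lc_nonneg D by (intro mult_left_mono) auto
    then show ?thesis using K by (simp add: divide_right_mono)
  qed
  finally show ?thesis .
qed

lemma PG_zero_bound:
  assumes t: "t \<in> {0..T}"
  shows "norm (PG (\<lambda>_. 0) t) \<le> norm (\<phi> 0) + A0 * T"
proof (cases "t \<le> 0")
  case True
  then show ?thesis using A0_nonneg T t by (simp add: PG_def)
next
  case False
  have i0: "fh (\<lambda>_. 0) integrable_on {0..t}" by (rule fh_int') simp
  have "norm (integral {0..t} (fh (\<lambda>_. 0))) \<le> integral {0..t} (\<lambda>_. A0)"
  proof (rule integral_norm_bound_integral[OF i0])
    fix r assume "r \<in> {0..t}"
    then show "norm (fh (\<lambda>_. 0) r) \<le> A0" using t fx_zero[of r] by (simp add: fh_def)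
  qed auto
  also have "\<dots> = t * A0" using False by simp
  also have "\<dots> \<le> T * A0" using t A0_nonneg by (intro mult_right_mono) auto
  finally have "norm (integral {0..t} (fh (\<lambda>_. 0))) \<le> T * A0" .
  then show ?thesis using False norm_triangle_ineq[of "\<phi> 0" "integral {0..t} (fh (\<lambda>_. 0))"]
    by (simp add: PG_def mult.commute)
qed

lemma PG_bound:
  assumes X: "continuous_on {-\<tau>..T} X" and K: "0 < K" and D: "0 \<le> D"
    and XD: "\<forall>s\<in>{-\<tau>..T}. norm (X s) \<le> D * exp (K * max 0 s)"
    and t: "t \<in> {0..T}"
  shows "norm (PG X t) \<le> norm (\<phi> 0) + A0 * T + Lc * D / K * exp (K * t)"
proof -
  have "norm (PG X t - PG (\<lambda>_. 0) t) \<le> Lc * D / K * exp (K * t)"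
    by (rule PG_diff[OF X _ K D _ t]) (use XD in auto)
  then show ?thesis using PG_zero_bound[OF t] norm_triangle_ineq2[of "PG X t" "PG (\<lambda>_. 0) t"]
    by linarith
qed

lemma maximizer:
  fixes w :: "real \<Rightarrow> real"
  assumes "continuous_on {-\<tau>..T} w"
  obtains s0 where "s0 \<in> {-\<tau>..T}" "\<And>s. s \<in> {-\<tau>..T} \<Longrightarrow> w s \<le> w s0"
  using continuous_attains_sup[OF compact_Icc _ assms] tau T by fastforce

lemma fp_bound:
  assumes X: "continuous_on {-\<tau>..T} X" and fp: "\<forall>s\<in>{-\<tau>..T}. X s = PG X s"
  shows "\<forall>s\<in>{-\<tau>..T}. norm (X s) \<le> Cx"
proof -
  define w where "w s = exp (-(Kc * max 0 s)) * norm (X s)" for s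
  have "continuous_on {-\<tau>..T} w" unfolding w_def by (intro continuous_intros X)
  then obtain s0 where s0: "s0 \<in> {-\<tau>..T}" and smax: "\<And>s. s \<in> {-\<tau>..T} \<Longrightarrow> w s \<le> w s0"
    using maximizer by blast
  define D where "D = w s0"
  have D: "0 \<le> D" by (simp add: D_def w_def)
  have wX: "norm (X s) = exp (Kc * max 0 s) * w s" for s
    by (simp add: w_def exp_minus)
  have XD: "\<forall>s\<in>{-\<tau>..T}. norm (X s) \<le> D * exp (Kc * max 0 s)"
  proof
    fix s assume "s \<in> {-\<tau>..T}"
    then have "w s \<le> D" using smax by (simp add: D_def)
    then show "norm (X s) \<le> D * exp (Kc * max 0 s)"
      unfolding wX by (simp add: mult.commute)
  qed
  define P where "P = norm (\<phi> 0) + A0 * T + Pphi"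
  have P0: "0 \<le> norm (\<phi> 0) + A0 * T" using A0_nonneg T by simp
  have "D \<le> P + D / 2"
  proof (cases "s0 \<le> 0")
    case True
    then have "X s0 = \<phi> s0" using fp s0 by (simp add: PG_def)
    then have "D = norm (\<phi> s0)" using True by (simp add: D_def w_def)
    also have "\<dots> \<le> Pphi" using Pphi s0 True by auto
    finally show ?thesis using P0 D by (simp add: P_def)
  next
    case False
    then have s0': "s0 \<in> {0..T}" using s0 by auto
    have "norm (X s0) \<le> norm (\<phi> 0) + A0 * T + Lc * D / Kc * exp (Kc * s0)"
      using PG_bound[OF X Kc_pos D XD s0'] fp s0 by simp
    then have "w s0 \<le> exp (-(Kc * s0)) * (norm (\<phi> 0) + A0 * T + Lc * D / Kc * exp (Kc * s0))"
      using False by (simp add: w_def)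
    also have "\<dots> = exp (-(Kc * s0)) * (norm (\<phi> 0) + A0 * T) + Lc * D / Kc"
      by (simp add: algebra_simps exp_minus)
    also have "\<dots> \<le> 1 * (norm (\<phi> 0) + A0 * T) + D / 2"
      using Lc_Kc[OF D] P0 False Kc_pos by (intro add_mono mult_right_mono) auto
    finally show ?thesis using Pphi_nonneg by (simp add: D_def P_def)
  qed
  then have D2: "D \<le> 2 * P" by simp
  show ?thesis
  proof
    fix s assume s: "s \<in> {-\<tau>..T}"
    have "norm (X s) \<le> D * exp (Kc * max 0 s)" using XD s by blast
    also have "\<dots> \<le> (2 * P) * exp (Kc * T)"
      using D2 D s Kc_pos T by (intro mult_mono) auto
    finally show "norm (X s) \<le> Cx" by (simp add: Cx_def P_def)
  qed
qed

lemma fp_unique: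
  assumes X: "continuous_on {-\<tau>..T} X" and fpX: "\<forall>s\<in>{-\<tau>..T}. X s = PG X s"
    and Y: "continuous_on {-\<tau>..T} Y" and fpY: "\<forall>s\<in>{-\<tau>..T}. Y s = PG Y s"
  shows "\<forall>s\<in>{-\<tau>..T}. X s = Y s"
proof -
  define w where "w s = exp (-(Kc * max 0 s)) * norm (X s - Y s)" for s
  have "continuous_on {-\<tau>..T} w" unfolding w_def by (intro continuous_intros X Y)
  then obtain s0 where s0: "s0 \<in> {-\<tau>..T}" and smax: "\<And>s. s \<in> {-\<tau>..T} \<Longrightarrow> w s \<le> w s0"
    using maximizer by blast
  define D where "D = w s0"
  have D: "0 \<le> D" by (simp add: D_def w_def)
  have wX: "norm (X s - Y s) = exp (Kc * max 0 s) * w s" for s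
    by (simp add: w_def exp_minus)
  have XD: "\<forall>s\<in>{-\<tau>..T}. norm (X s - Y s) \<le> D * exp (Kc * max 0 s)"
  proof
    fix s assume "s \<in> {-\<tau>..T}"
    then have "w s \<le> D" using smax by (simp add: D_def)
    then show "norm (X s - Y s) \<le> D * exp (Kc * max 0 s)"
      unfolding wX by (simp add: mult.commute)
  qed
  have "D \<le> D / 2"
  proof (cases "s0 \<le> 0")
    case True
    then have "X s0 = Y s0" using fpX fpY s0 by (simp add: PG_def)
    then show ?thesis using D by (simp add: D_def w_def)
  next
    case False
    then have s0': "s0 \<in> {0..T}" using s0 by auto
    have "norm (X s0 - Y s0) \<le> Lc * D / Kc * exp (Kc * s0)"
      using PG_diff[OF X Y Kc_pos D XD s0'] fpX fpY s0 by simp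
    then have "exp (-(Kc * s0)) * norm (X s0 - Y s0) \<le> exp (-(Kc * s0)) * (Lc * D / Kc * exp (Kc * s0))"
      by (rule mult_left_mono) simp
    then have "w s0 \<le> exp (-(Kc * s0)) * (Lc * D / Kc * exp (Kc * s0))"
      using False by (simp only: w_def max_def) simp
    also have "\<dots> = Lc * D / Kc"
      by (simp add: exp_minus)
    also have "\<dots> \<le> D / 2" by (rule Lc_Kc[OF D])
    finally show ?thesis by (simp add: D_def)
  qed
  then have "D = 0" using D by simp
  then show ?thesis using XD by auto
qed

end

context dde_u begin

definition "cl t = max (-\<tau>) (min t T)"

lemma cl_in: "cl t \<in> {-\<tau>..T}" using tau T by (auto simp: cl_def)
lemma cl_id: "t \<in> {-\<tau>..T} \<Longrightarrow> cl t = t" by (auto simp: cl_def)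
lemma cl_cont: "continuous_on UNIV cl" unfolding cl_def[abs_def] by (intro continuous_intros)

definition "Xz (z :: real \<Rightarrow>\<^sub>C (real^'n)) t = exp (Kc * max 0 t) *\<^sub>R apply_bcontfun z t"

lemma Xz_cont: "continuous_on S (Xz z)"
  unfolding Xz_def[abs_def] by (intro continuous_intros) auto

definition "psi z t = exp (-(Kc * max 0 (cl t))) *\<^sub>R PG (Xz z) (cl t)"

lemma psi_bc: "psi z \<in> bcontfun"
proof -
  have pc: "continuous_on {-\<tau>..T} (PG (Xz z))" by (rule PG_cont[OF Xz_cont])
  obtain d where d: "0 \<le> d" "\<And>s. s \<in> {-\<tau>..T} \<Longrightarrow> norm (PG (Xz z) s) \<le> d"
    using cont_bounded[OF pc] by blast
  show ?thesis
  proof (rule bcontfun_normI)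
    have "continuous_on UNIV (\<lambda>t. PG (Xz z) (cl t))"
      by (rule continuous_on_compose2[OF pc cl_cont]) (use cl_in in auto)
    moreover have "continuous_on UNIV (\<lambda>t. exp (-(Kc * max 0 (cl t))))"
      by (intro continuous_intros continuous_on_compose2[OF _ cl_cont]) auto
    ultimately show "continuous_on UNIV (psi z)"
      unfolding psi_def[abs_def] by (intro continuous_intros cl_cont)
    fix t
    have "exp (-(Kc * max 0 (cl t))) \<le> 1" using Kc_pos by simp
    moreover have "norm (PG (Xz z) (cl t)) \<le> d" using d cl_in by blast
    ultimately have "exp (-(Kc * max 0 (cl t))) * norm (PG (Xz z) (cl t)) \<le> 1 * d"
      using d by (intro mult_mono) auto
    then show "norm (psi z t) \<le> 1 * d"
      unfolding psi_def by simp
  qed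
qed

definition "Psi z = Bcontfun (psi z)"

lemma Psi_apply: "apply_bcontfun (Psi z) = psi z"
  unfolding Psi_def using psi_bc by (simp add: Bcontfun_inverse)

lemma Psi_contr: "dist (Psi z) (Psi z') \<le> 1/2 * dist z z'"
proof (rule dist_bound)
  fix t
  define s where "s = cl t"
  define D where "D = dist z z'"
  have s: "s \<in> {-\<tau>..T}" using cl_in by (simp add: s_def)
  have D: "0 \<le> D" by (simp add: D_def)
  have "dist (Psi z t) (Psi z' t) = exp (-(Kc * max 0 s)) * norm (PG (Xz z) s - PG (Xz z') s)"
    by (simp add: Psi_apply psi_def s_def dist_norm flip: scaleR_diff_right)
  also have "\<dots> \<le> D / 2"
  proof (cases "s \<le> 0")
    case True
    then show ?thesis using D by (simp add: PG_def)
  next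
    case False
    then have s': "s \<in> {0..T}" using s by auto
    have "norm (PG (Xz z) s - PG (Xz z') s) \<le> Lc * D / Kc * exp (Kc * s)"
    proof (rule PG_diff[OF Xz_cont Xz_cont Kc_pos D _ s'])
      show "\<forall>r\<in>{- \<tau>..T}. norm (Xz z r - Xz z' r) \<le> D * exp (Kc * max 0 r)"
      proof
        fix r
        have "norm (Xz z r - Xz z' r) = exp (Kc * max 0 r) * dist (z r) (z' r)"
          by (simp add: Xz_def dist_norm flip: scaleR_diff_right)
        also have "\<dots> \<le> exp (Kc * max 0 r) * D"
          unfolding D_def by (intro mult_left_mono dist_bounded) auto
        finally show "norm (Xz z r - Xz z' r) \<le> D * exp (Kc * max 0 r)" by (simp add: mult.commute)
      qed
    qed
    then have "exp (-(Kc * s)) * norm (PG (Xz z) s - PG (Xz z') s) \<le> exp (-(Kc * s)) * (Lc * D / Kc * exp (Kc * s))"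
      by (rule mult_left_mono) simp
    also have "\<dots> = Lc * D / Kc" by (simp add: exp_minus)
    also have "\<dots> \<le> D / 2" by (rule Lc_Kc[OF D])
    finally show ?thesis using False by (simp add: max_def)
  qed
  finally show "dist (Psi z t) (Psi z' t) \<le> 1/2 * dist z z'" by (simp add: D_def)
qed

lemma exists_fp: "\<exists>X. continuous_on {-\<tau>..T} X \<and> (\<forall>s\<in>{-\<tau>..T}. X s = PG X s)"
proof -
  obtain z where z: "Psi z = z"
    using banach_fix_type[of "1/2" Psi] Psi_contr by auto
  have "Xz z s = PG (Xz z) s" if s: "s \<in> {-\<tau>..T}" for s
  proof -
    have "apply_bcontfun z s = psi z s" using z Psi_apply by metis
    also have "\<dots> = exp (-(Kc * max 0 s)) *\<^sub>R PG (Xz z) s" using cl_id[OF s] by (simp add: psi_def)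
    finally show ?thesis by (simp add: Xz_def exp_minus)
  qed
  then show ?thesis using Xz_cont by blast
qed

end

lemma leb_right:
  fixes f :: "real \<Rightarrow> 'b::euclidean_space"
  assumes int: "\<And>a b. f integrable_on cbox a b"
  obtains N where "negligible N"
    "\<And>x e. x \<notin> N \<Longrightarrow> 0 < e \<Longrightarrow> \<exists>d>0. \<forall>h. 0 < h \<and> h < d \<longrightarrow> norm (integral {x..x+h} f /\<^sub>R h - f x) < e"
proof -
  obtain N where N: "negligible N" and H: "\<And>x e. x \<notin> N \<Longrightarrow> 0 < e \<Longrightarrow>
      \<exists>d>0. \<forall>h. 0 < h \<and> h < d \<longrightarrow> norm (integral (cbox x (x + h *\<^sub>R One)) f /\<^sub>R h ^ DIM(real) - f x) < e"
    using integrable_ccontinuous_explicit[OF int] by blast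
  show ?thesis
  proof (rule that[OF N])
    fix x e :: real assume "x \<notin> N" "0 < e"
    from H[OF this] show "\<exists>d>0. \<forall>h. 0 < h \<and> h < d \<longrightarrow> norm (integral {x..x+h} f /\<^sub>R h - f x) < e"
      by (simp add: cbox_interval)
  qed
qed

lemma leb_left:
  fixes f :: "real \<Rightarrow> 'b::euclidean_space"
  assumes int: "\<And>a b. f integrable_on cbox a b"
  obtains N where "negligible N"
    "\<And>x e. x \<notin> N \<Longrightarrow> 0 < e \<Longrightarrow> \<exists>d>0. \<forall>h. 0 < h \<and> h < d \<longrightarrow> norm (integral {x-h..x} f /\<^sub>R h - f x) < e"
proof -
  have int': "(\<lambda>y. f (-y)) integrable_on cbox a b" for a b
    using int[of "-b" "-a"] Henstock_Kurzweil_Integration.integrable_reflect_real[where f=f and a="-b" and b="-a"] by (simp add: cbox_interval)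
  obtain N' where N': "negligible N'" and H: "\<And>x e. x \<notin> N' \<Longrightarrow> 0 < e \<Longrightarrow>
      \<exists>d>0. \<forall>h. 0 < h \<and> h < d \<longrightarrow> norm (integral {x..x+h} (\<lambda>y. f (-y)) /\<^sub>R h - f (-x)) < e"
    using leb_right[OF int'] by blast
  have neg: "negligible (uminus ` N')"
    by (rule negligible_differentiable_image_negligible[OF _ N']) (auto intro: derivative_intros)
  show ?thesis
  proof (rule that[OF neg])
    fix x e :: real assume x: "x \<notin> uminus ` N'" and e: "0 < e"
    have "-x \<notin> N'" using x by (metis image_eqI minus_minus)
    from H[OF this e] obtain d where d: "d > 0"
      "\<forall>h. 0 < h \<and> h < d \<longrightarrow> norm (integral {-x..-x+h} (\<lambda>y. f (-y)) /\<^sub>R h - f x) < e"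
      by auto
    have eq: "integral {-x..-x+h} (\<lambda>y. f (-y)) = integral {x-h..x} f" for h
      using Henstock_Kurzweil_Integration.integral_reflect_real[where f=f and b=x and a="x-h"] by simp
    show "\<exists>d>0. \<forall>h. 0 < h \<and> h < d \<longrightarrow> norm (integral {x-h..x} f /\<^sub>R h - f x) < e"
      using d eq by auto
  qed
qed

lemma indef_deriv_ae:
  fixes f :: "real \<Rightarrow> 'b::euclidean_space"
  assumes int: "\<And>a b. f integrable_on cbox a b"
  obtains N where "negligible N"
    "\<And>x. x \<notin> N \<Longrightarrow> a < x \<Longrightarrow> ((\<lambda>t. integral {a..t} f) has_vector_derivative f x) (at x)"
proof -
  obtain N1 where N1: "negligible N1" and H1: "\<And>x e. x \<notin> N1 \<Longrightarrow> 0 < e \<Longrightarrow>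
      \<exists>d>0. \<forall>h. 0 < h \<and> h < d \<longrightarrow> norm (integral {x..x+h} f /\<^sub>R h - f x) < e"
    using leb_right[OF int] by blast
  obtain N2 where N2: "negligible N2" and H2: "\<And>x e. x \<notin> N2 \<Longrightarrow> 0 < e \<Longrightarrow>
      \<exists>d>0. \<forall>h. 0 < h \<and> h < d \<longrightarrow> norm (integral {x-h..x} f /\<^sub>R h - f x) < e"
    using leb_left[OF int] by blast
  have intab: "f integrable_on {c..d}" for c d using int[of c d] by (simp add: cbox_interval)
  show ?thesis
  proof (rule that[of "N1 \<union> N2"])
    show "negligible (N1 \<union> N2)" using N1 N2 by simp
    fix x assume x: "x \<notin> N1 \<union> N2" "a < x"
    define I where "I t = integral {a..t} f" for t
    have R: "((\<lambda>y. (I y - I x - (y - x) *\<^sub>R f x) /\<^sub>R norm (y - x)) \<longlongrightarrow> 0) (at_right x)"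
    proof (rule tendstoI)
      fix e :: real assume e: "0 < e"
      obtain d where d: "d > 0" "\<forall>h. 0 < h \<and> h < d \<longrightarrow> norm (integral {x..x+h} f /\<^sub>R h - f x) < e"
        using H1[of x e] x e by blast
      show "\<forall>\<^sub>F y in at_right x. dist ((I y - I x - (y - x) *\<^sub>R f x) /\<^sub>R norm (y - x)) 0 < e"
        unfolding eventually_at_right_field
      proof (intro exI[of _ "x + d"] conjI allI impI)
        show "x < x + d" using d by simp
        fix y assume y: "x < y" "y < x + d"
        have "I y = I x + integral {x..y} f"
          using Henstock_Kurzweil_Integration.integral_combine[where a=a and c=x and b=y and f=f] x y intab unfolding I_def by simp
        then have "(I y - I x - (y - x) *\<^sub>R f x) /\<^sub>R norm (y - x) = integral {x..x+(y-x)} f /\<^sub>R (y-x) - f x"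
          using y by (simp add: scaleR_diff_right)
        then show "dist ((I y - I x - (y - x) *\<^sub>R f x) /\<^sub>R norm (y - x)) 0 < e"
          using d(2)[rule_format, of "y-x"] y by simp
      qed
    qed
    have L: "((\<lambda>y. (I y - I x - (y - x) *\<^sub>R f x) /\<^sub>R norm (y - x)) \<longlongrightarrow> 0) (at_left x)"
    proof (rule tendstoI)
      fix e :: real assume e: "0 < e"
      obtain d where d: "d > 0" "\<forall>h. 0 < h \<and> h < d \<longrightarrow> norm (integral {x-h..x} f /\<^sub>R h - f x) < e"
        using H2[of x e] x e by blast
      show "\<forall>\<^sub>F y in at_left x. dist ((I y - I x - (y - x) *\<^sub>R f x) /\<^sub>R norm (y - x)) 0 < e"
        unfolding eventually_at_left_field
      proof (intro exI[of _ "max a (x - d)"] conjI allI impI)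
        show "max a (x - d) < x" using d x by simp
        fix y assume y: "max a (x - d) < y" "y < x"
        have "I x = I y + integral {y..x} f"
          using Henstock_Kurzweil_Integration.integral_combine[where a=a and c=y and b=x and f=f] x y intab unfolding I_def by simp
        then have e1: "I y - I x - (y - x) *\<^sub>R f x = - (integral {y..x} f - (x - y) *\<^sub>R f x)"
          by (simp add: algebra_simps)
        have e2: "norm (y - x) = x - y" using y by simp
        have e3: "(integral {y..x} f - (x - y) *\<^sub>R f x) /\<^sub>R (x - y) = integral {y..x} f /\<^sub>R (x - y) - f x"
          using y by (simp add: scaleR_diff_right)
        have "(I y - I x - (y - x) *\<^sub>R f x) /\<^sub>R norm (y - x) = - (integral {x-(x-y)..x} f /\<^sub>R (x-y) - f x)"
          unfolding e1 e2 scaleR_minus_right e3 by simp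
        then show "dist ((I y - I x - (y - x) *\<^sub>R f x) /\<^sub>R norm (y - x)) 0 < e"
          using d(2)[rule_format, of "x-y"] y by (simp add: norm_minus_commute)
      qed
    qed
    have "((\<lambda>y. (I y - I x - (y - x) *\<^sub>R f x) /\<^sub>R norm (y - x)) \<longlongrightarrow> 0) (at x)"
      by (rule filterlim_split_at[OF L R])
    then show "((\<lambda>t. integral {a..t} f) has_vector_derivative f x) (at x)"
      unfolding has_vector_derivative_def has_derivative_at_within I_def[symmetric]
      by (simp add: bounded_linear_scaleR_left)
  qed
qed

lemma bounded_meas_int:
  fixes f :: "real \<Rightarrow> 'b::euclidean_space"
  assumes "f \<in> borel_measurable lebesgue" "\<And>r. norm (f r) \<le> C"
  shows "f integrable_on cbox a b"
proof (rule measurable_bounded_by_integrable_imp_integrable)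
  show "f \<in> borel_measurable (lebesgue_on (cbox a b))"
    using assms(1) by (rule measurable_restrict_space1)
  show "(\<lambda>_. C) integrable_on cbox a b" by (rule integrable_const)
qed (use assms(2) in auto)

context dde_u begin

lemma fp_int_eq:
  assumes fp: "\<forall>s\<in>{-\<tau>..T}. X s = PG X s" and t: "t \<in> {0..T}"
  shows "X t = X 0 + integral {0..t} (fh X)"
proof -
  have "X 0 = \<phi> 0" using fp tau T by (auto simp: PG_def)
  moreover have "X t = PG X t" using fp t tau by auto
  ultimately show ?thesis using t by (cases "t \<le> 0") (auto simp: PG_def)
qed

lemma fh_fx: "r \<in> {0..T} \<Longrightarrow> fh X r = fx X r" by (simp add: fh_def)

lemma fp_solution:
  assumes X: "continuous_on {-\<tau>..T} X" and fp: "\<forall>s\<in>{-\<tau>..T}. X s = PG X s"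
  shows "is_solution T \<tau> F0 F1 \<phi> u X"
  unfolding is_solution_def
proof (intro conjI)
  show "continuous_on {-\<tau>..T} X" by (rule X)
  have X0: "continuous_on {0..T} X" by (rule continuous_on_subset[OF X]) (use tau in auto)
  show "W1inf T X"
  proof -
    have m1: "X \<in> borel_measurable (lebesgue_on {0..T})"
      by (rule continuous_imp_measurable_on_sets_lebesgue[OF X0]) simp
    obtain d where d: "\<And>s. s \<in> {0..T} \<Longrightarrow> norm (X s) \<le> d" using cont_bounded[OF X0] by blast
    have a1: "AE t in lebesgue_on {0..T}. norm (X t) \<le> d"
      by (rule AE_I2) (use d in \<open>auto simp: space_restrict_space\<close>)
    have m2: "fh X \<in> borel_measurable (lebesgue_on {0..T})"
      using fh_meas[OF X] by (rule measurable_restrict_space1)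
    obtain C where C: "\<And>r. norm (fh X r) \<le> C" using fh_bounded[OF X] by blast
    have a2: "AE t in lebesgue_on {0..T}. norm (fh X t) \<le> C" using C by simp
    have e: "\<forall>t\<in>{0..T}. X t = X 0 + integral {0..t} (fh X)" using fp_int_eq[OF fp] by blast
    show ?thesis unfolding W1inf_def Linf_def using m1 a1 m2 a2 e by blast
  qed
  show "AE t in lebesgue_on {0<..<T}.
     (X has_vector_derivative F0 (X t) (delay_max \<tau> X t) + F1 (X t) (delay_max \<tau> X t) *v u t) (at t)"
  proof -
    obtain N1 where N1: "negligible N1"
      and D1: "\<And>x. x \<notin> N1 \<Longrightarrow> 0 < x \<Longrightarrow> ((\<lambda>t. integral {0..t} (fh X)) has_vector_derivative fh X x) (at x)"
      using indef_deriv_ae[OF fh_int[OF X]] by blast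
    obtain N2 where N2: "negligible N2" and U: "\<And>x. x \<in> {0..T} \<Longrightarrow> x \<notin> N2 \<Longrightarrow> ut x = u x"
      using AE_on_negligible[OF ut_ae] by auto
    show ?thesis
    proof (rule negligible_AE_on[of "N1 \<union> N2"])
      show "negligible (N1 \<union> N2)" using N1 N2 by simp
      fix x assume x: "x \<in> {0<..<T}" "x \<notin> N1 \<union> N2"
      have "((\<lambda>t. X 0 + integral {0..t} (fh X)) has_vector_derivative 0 + fh X x) (at x)"
        using D1[of x] x by (intro derivative_intros) auto
      then have "((\<lambda>t. X 0 + integral {0..t} (fh X)) has_vector_derivative fh X x) (at x)" by simp
      then have "(X has_vector_derivative fh X x) (at x)"
      proof (rule has_vector_derivative_transform_within_open[where S="{0<..<T}"])
        show "x \<in> {0<..<T}" using x by simp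
        fix y :: real assume "y \<in> {0<..<T}"
        then show "X 0 + integral {0..y} (fh X) = X y" using fp_int_eq[OF fp, of y] by simp
      qed simp
      moreover have "fh X x = F0 (X x) (delay_max \<tau> X x) + F1 (X x) (delay_max \<tau> X x) *v u x"
        using x U[of x] by (simp add: fh_def fx_def)
      ultimately show "(X has_vector_derivative F0 (X x) (delay_max \<tau> X x) + F1 (X x) (delay_max \<tau> X x) *v u x) (at x)"
        by simp
    qed simp
  qed
  show "\<forall>t\<in>{-\<tau>..0}. X t = \<phi> t" using fp T by (auto simp: PG_def)
qed

end

context dde_u begin

lemma solution_fp:
  assumes sol: "is_solution T \<tau> F0 F1 \<phi> u Y"
  shows "\<forall>s\<in>{-\<tau>..T}. Y s = PG Y s"
proof -
  have Yc: "continuous_on {-\<tau>..T} Y" and W: "W1inf T Y"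
    and DA: "AE t in lebesgue_on {0<..<T}.
        (Y has_vector_derivative F0 (Y t) (delay_max \<tau> Y t) + F1 (Y t) (delay_max \<tau> Y t) *v u t) (at t)"
    and init: "\<forall>t\<in>{-\<tau>..0}. Y t = \<phi> t"
    using sol unfolding is_solution_def by auto
  from W obtain g Bg where gm: "g \<in> borel_measurable (lebesgue_on {0..T})"
    and gB: "AE t in lebesgue_on {0..T}. norm (g t) \<le> Bg"
    and Yg: "\<forall>t\<in>{0..T}. Y t = Y 0 + integral {0..t} g"
    unfolding W1inf_def Linf_def by blast
  define g' where "g' r = (if norm (g r) \<le> Bg then g r else 0)" for r
  have g'm: "g' \<in> borel_measurable (lebesgue_on {0..T})"
    unfolding g'_def[abs_def] using gm by measurable
  define gt where "gt r = (if r \<in> {0..T} then g' r else 0)" for r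
  have gtm: "gt \<in> borel_measurable lebesgue"
    unfolding gt_def[abs_def] by (rule borel_measurable_if_I[OF g'm]) simp
  have gtb: "norm (gt r) \<le> max Bg 0" for r
    unfolding gt_def g'_def by auto
  have gti: "gt integrable_on cbox a b" for a b by (rule bounded_meas_int[OF gtm gtb])
  obtain N1 where N1: "negligible N1" and N1b: "\<And>r. r \<in> {0..T} \<Longrightarrow> r \<notin> N1 \<Longrightarrow> norm (g r) \<le> Bg"
    using AE_on_negligible[OF gB] by auto
  have gt_eq: "gt r = g r" if "r \<in> {0..T}" "r \<notin> N1" for r
    using N1b[OF that] that by (simp add: gt_def g'_def)
  have Y0: "Y 0 = \<phi> 0" using init tau by auto
  have Ygt: "Y t = Y 0 + integral {0..t} gt" if t: "t \<in> {0..T}" for t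
  proof -
    have "integral {0..t} g = integral {0..t} gt"
    proof (rule integral_spike[OF N1])
      fix x assume x: "x \<in> {0..t} - N1"
      then have "x \<in> {0..T}" "x \<notin> N1" using t by auto
      then show "gt x = g x" by (rule gt_eq)
    qed
    moreover have "Y t = Y 0 + integral {0..t} g" using Yg t by blast
    ultimately show ?thesis by (simp only:)
  qed
  obtain N2 where N2: "negligible N2"
    and D2: "\<And>x. x \<notin> N2 \<Longrightarrow> 0 < x \<Longrightarrow> ((\<lambda>t. integral {0..t} gt) has_vector_derivative gt x) (at x)"
    using indef_deriv_ae[OF gti] by blast
  obtain N3 where N3: "negligible N3"
    and D3: "\<And>x. x \<in> {0<..<T} \<Longrightarrow> x \<notin> N3 \<Longrightarrow>
        (Y has_vector_derivative F0 (Y x) (delay_max \<tau> Y x) + F1 (Y x) (delay_max \<tau> Y x) *v u x) (at x)"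
    using AE_on_negligible[OF DA] by auto
  obtain N4 where N4: "negligible N4" and U: "\<And>x. x \<in> {0..T} \<Longrightarrow> x \<notin> N4 \<Longrightarrow> ut x = u x"
    using AE_on_negligible[OF ut_ae] by auto
  have key: "fh Y r = gt r" if r: "r \<in> {0<..<T}" "r \<notin> N2 \<union> N3 \<union> N4" for r
  proof -
    have "((\<lambda>t. Y 0 + integral {0..t} gt) has_vector_derivative 0 + gt r) (at r)"
      using D2[of r] r by (intro derivative_intros) auto
    then have "((\<lambda>t. Y 0 + integral {0..t} gt) has_vector_derivative gt r) (at r)" by simp
    then have a: "(Y has_vector_derivative gt r) (at r)"
    proof (rule has_vector_derivative_transform_within_open[where S="{0<..<T}"])
      show "r \<in> {0<..<T}" using r by simp
      fix y :: real assume "y \<in> {0<..<T}"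
      then show "Y 0 + integral {0..y} gt = Y y" using Ygt[of y] by simp
    qed simp
    have b: "(Y has_vector_derivative F0 (Y r) (delay_max \<tau> Y r) + F1 (Y r) (delay_max \<tau> Y r) *v u r) (at r)"
      using D3[of r] r by auto
    have "gt r = F0 (Y r) (delay_max \<tau> Y r) + F1 (Y r) (delay_max \<tau> Y r) *v u r"
      by (rule vector_derivative_unique_at[OF a b])
    also have "\<dots> = fh Y r" using r U[of r] by (simp add: fh_def fx_def)
    finally show ?thesis by simp
  qed
  show ?thesis
  proof
    fix s assume s: "s \<in> {-\<tau>..T}"
    show "Y s = PG Y s"
    proof (cases "s \<le> 0")
      case True
      then show ?thesis using init s by (simp add: PG_def)
    next
      case False
      have neg: "negligible (N2 \<union> N3 \<union> N4 \<union> {0, T})" using N2 N3 N4 by simp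
      have "integral {0..s} gt = integral {0..s} (fh Y)"
      proof (rule integral_spike[OF neg])
        fix x assume x: "x \<in> {0..s} - (N2 \<union> N3 \<union> N4 \<union> {0, T})"
        then have "x \<in> {0<..<T}" "x \<notin> N2 \<union> N3 \<union> N4" using s by auto
        then show "fh Y x = gt x" by (rule key)
      qed
      then show ?thesis using Ygt[of s] s False Y0 by (simp add: PG_def)
    qed
  qed
qed

lemma sol_bound:
  assumes sol: "is_solution T \<tau> F0 F1 \<phi> u Y"
  shows "W1inf_bounded_by T Y (max Cx (A0 + Lc * Cx))"
proof -
  have Yc: "continuous_on {-\<tau>..T} Y" using sol unfolding is_solution_def by auto
  have fp: "\<forall>s\<in>{-\<tau>..T}. Y s = PG Y s" by (rule solution_fp[OF sol])
  have bd: "\<forall>s\<in>{-\<tau>..T}. norm (Y s) \<le> Cx" by (rule fp_bound[OF Yc fp])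
  have a1: "AE t in lebesgue_on {0..T}. norm (Y t) \<le> max Cx (A0 + Lc * Cx)"
  proof (rule AE_I2)
    fix t assume "t \<in> space (lebesgue_on {0..T})"
    then have "t \<in> {-\<tau>..T}" using tau by (auto simp: space_restrict_space)
    then have "norm (Y t) \<le> Cx" using bd by blast
    then show "norm (Y t) \<le> max Cx (A0 + Lc * Cx)" by linarith
  qed
  have m2: "fh Y \<in> borel_measurable (lebesgue_on {0..T})"
    using fh_meas[OF Yc] by (rule measurable_restrict_space1)
  have e: "\<forall>t\<in>{0..T}. Y t = Y 0 + integral {0..t} (fh Y)" using fp_int_eq[OF fp] by blast
  have b2: "norm (fh Y t) \<le> max Cx (A0 + Lc * Cx)" if t: "t \<in> {0..T}" for t
  proof -
    have "norm (fx Y t) \<le> A0 + Lc * Cx"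
    proof (rule fx_bound)
      show "continuous_on {t - \<tau>..t} Y" by (rule continuous_on_subset[OF Yc]) (use t in auto)
      show "\<forall>s\<in>{t - \<tau>..t}. norm (Y s) \<le> Cx" using bd t by auto
    qed
    then show ?thesis using t by (simp add: fh_def)
  qed
  have a2: "AE t in lebesgue_on {0..T}. norm (fh Y t) \<le> max Cx (A0 + Lc * Cx)"
    by (rule AE_I2) (use b2 in \<open>simp add: space_restrict_space\<close>)
  show ?thesis unfolding W1inf_bounded_by_def using a1 m2 e a2 by blast
qed

end

definition bigC :: "real \<Rightarrow> real \<Rightarrow> (real^'n \<Rightarrow> real^'n \<Rightarrow> real^'n) \<Rightarrow> (real^'n \<Rightarrow> real^'n \<Rightarrow> real^'m^'n)
    \<Rightarrow> (real \<Rightarrow> real^'n) \<Rightarrow> real \<Rightarrow> real \<Rightarrow> real \<Rightarrow> real" where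
  "bigC T \<tau> F0 F1 \<phi> L0 L1 B =
    (let Lc = (L0 + real CARD('n) * real CARD('m) * L1 * B) * (1 + real CARD('n));
         A0 = norm (F0 0 0) + real CARD('n) * real CARD('m) * norm (F1 0 0) * B;
         Kc = 2 * Lc + 1;
         Pphi = (SUP s\<in>{-\<tau>..0}. norm (\<phi> s));
         Cx = 2 * (norm (\<phi> 0) + A0 * T + Pphi) * exp (Kc * T)
     in max Cx (A0 + Lc * Cx))"

lemma (in dde_u) bigC_eq: "bigC T \<tau> F0 F1 \<phi> L0 L1 B = max Cx (A0 + Lc * Cx)"
  by (simp add: bigC_def Let_def Cx_def Kc_def Lc_def A0_def Pphi_def)

theorem corollary3p3:
  fixes T \<tau> :: real
    and F0 :: "real^'n \<Rightarrow> real^'n \<Rightarrow> real^'n"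
    and F1 :: "real^'n \<Rightarrow> real^'n \<Rightarrow> real^'m^'n"
    and \<phi> :: "real \<Rightarrow> real^'n"
  assumes "T > 0" and "\<tau> > 0"
    and "\<exists>L. L-lipschitz_on UNIV (\<lambda>(x, v). F0 x v)"
    and "\<exists>L. L-lipschitz_on UNIV (\<lambda>(x, v). F1 x v)"
    and "C1_map (\<lambda>(x, v). F0 x v)"
    and "C1_map (\<lambda>(x, v). F1 x v)"
    and "continuous_on {-\<tau>..0} \<phi>"
  shows "(\<forall>u :: real \<Rightarrow> real^'m. Linf T u \<longrightarrow>
            (\<exists>x. is_solution T \<tau> F0 F1 \<phi> u x \<and>
                 (\<forall>y. is_solution T \<tau> F0 F1 \<phi> u y \<longrightarrow> (\<forall>t\<in>{-\<tau>..T}. y t = x t))))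
       \<and> (\<forall>R. \<exists>C. \<forall>u x. Linf T u \<and> (AE t in lebesgue_on {0..T}. norm (u t) \<le> R)
                      \<and> is_solution T \<tau> F0 F1 \<phi> u x \<longrightarrow> W1inf_bounded_by T x C)"
proof -
  obtain L0 where L0: "L0-lipschitz_on UNIV (\<lambda>(x, v). F0 x v)" using assms(3) by blast
  obtain L1 where L1: "L1-lipschitz_on UNIV (\<lambda>(x, v). F1 x v)" using assms(4) by blast
  have loc: "dde T \<tau> F0 F1 \<phi> L0 L1"
    by (rule dde.intro) (use assms L0 L1 in auto)
  have U: "dde_u T \<tau> F0 F1 \<phi> L0 L1 u (max B 0)"
    if um: "u \<in> borel_measurable (lebesgue_on {0..T})"
      and uB: "AE t in lebesgue_on {0..T}. norm (u t) \<le> B" for u :: "real \<Rightarrow> real^'m" and B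
  proof (rule dde_u.intro[OF loc], rule dde_u_axioms.intro)
    show "0 \<le> max B 0" by simp
    show "u \<in> borel_measurable (lebesgue_on {0..T})" by (rule um)
    show "AE t in lebesgue_on {0..T}. norm (u t) \<le> max B 0"
      using uB by eventually_elim simp
  qed
  have P1: "\<forall>u :: real \<Rightarrow> real^'m. Linf T u \<longrightarrow>
            (\<exists>x. is_solution T \<tau> F0 F1 \<phi> u x \<and>
                 (\<forall>y. is_solution T \<tau> F0 F1 \<phi> u y \<longrightarrow> (\<forall>t\<in>{-\<tau>..T}. y t = x t)))"
  proof (intro allI impI)
    fix u :: "real \<Rightarrow> real^'m" assume "Linf T u"
    then obtain B where um: "u \<in> borel_measurable (lebesgue_on {0..T})"
      and uB: "AE t in lebesgue_on {0..T}. norm (u t) \<le> B"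
      unfolding Linf_def by blast
    interpret UU: dde_u T \<tau> F0 F1 \<phi> L0 L1 u "max B 0" by (rule U[OF um uB])
    obtain X where X: "continuous_on {-\<tau>..T} X" and fp: "\<forall>s\<in>{-\<tau>..T}. X s = UU.PG X s"
      using UU.exists_fp by blast
    show "\<exists>x. is_solution T \<tau> F0 F1 \<phi> u x \<and>
                 (\<forall>y. is_solution T \<tau> F0 F1 \<phi> u y \<longrightarrow> (\<forall>t\<in>{-\<tau>..T}. y t = x t))"
    proof (intro exI conjI allI impI)
      show "is_solution T \<tau> F0 F1 \<phi> u X" by (rule UU.fp_solution[OF X fp])
      fix y assume y: "is_solution T \<tau> F0 F1 \<phi> u y"
      have yc: "continuous_on {-\<tau>..T} y" using y unfolding is_solution_def by auto
      show "\<forall>t\<in>{-\<tau>..T}. y t = X t" by (rule UU.fp_unique[OF yc UU.solution_fp[OF y] X fp])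
    qed
  qed
  have P2: "\<forall>R. \<exists>C. \<forall>u x. Linf T u \<and> (AE t in lebesgue_on {0..T}. norm (u t) \<le> R)
                      \<and> is_solution T \<tau> F0 F1 \<phi> u x \<longrightarrow> W1inf_bounded_by T x C"
  proof
    fix R :: real
    show "\<exists>C. \<forall>u x. Linf T u \<and> (AE t in lebesgue_on {0..T}. norm (u t) \<le> R)
                      \<and> is_solution T \<tau> F0 F1 \<phi> u x \<longrightarrow> W1inf_bounded_by T x C"
    proof (intro exI allI impI)
      fix u :: "real \<Rightarrow> real^'m" and x
      assume H: "Linf T u \<and> (AE t in lebesgue_on {0..T}. norm (u t) \<le> R) \<and> is_solution T \<tau> F0 F1 \<phi> u x"
      then have um: "u \<in> borel_measurable (lebesgue_on {0..T})"
        and uR: "AE t in lebesgue_on {0..T}. norm (u t) \<le> R" and sol: "is_solution T \<tau> F0 F1 \<phi> u x"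
        unfolding Linf_def by auto
      interpret UU: dde_u T \<tau> F0 F1 \<phi> L0 L1 u "max R 0" by (rule U[OF um uR])
      show "W1inf_bounded_by T x (bigC T \<tau> F0 F1 \<phi> L0 L1 (max R 0))"
        unfolding UU.bigC_eq by (rule UU.sol_bound[OF sol])
    qed
  qed
  show ?thesis using P1 P2 by blast
qed

end
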